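(* Let $H$ be a Hermitian operator on a $d$-dimensional Hilbert space with spectral decomposition $H=\sum_{i=1}^M\lambda_i\Pi_i$, where $M\ge 2$, $\lambda_M>\cdots>\lambda_1$ are the distinct eigenvalues and $\Pi_i$ the spectral projections. Let $\Delta=\lambda_2-\lambda_1$, $d_G=\operatorname{Tr}[\Pi_1]$, and $\varepsilon\in(0,1)$. If $$\beta=\frac{1}{\Delta}\ln\!\left[\left(\frac{1-\varepsilon}{\varepsilon}\right)\left(\frac{d-d_G}{d_G}\right)\right]$$ and $\beta\ge 0$, then $$\frac{1}{2}\left\|\frac{e^{-\beta H}}{\operatorname{Tr}[e^{-\beta H}]}-\frac{\Pi_1}{\operatorname{Tr}[\Pi_1]}\right\|_1\le\varepsilon.$$
   Context: $\|A\|_1=\operatorname{Tr}[\sqrt{A^\dagger A}]$ is the trace norm. *)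

theory Defs
  imports "HOL-Analysis.Analysis"
begin

text \<open>Operators on a d-dimensional Hilbert space are complex matrices indexed by a
finite type 'n, with d = CARD('n).\<close>

definition adjoint :: "complex^'n^'n \<Rightarrow> complex^'n^'n" where
  "adjoint A = (\<chi> i j. cnj (A $ j $ i))"

definition hermitian :: "complex^'n^'n \<Rightarrow> bool" where
  "hermitian A \<longleftrightarrow> adjoint A = A"

definition psd :: "complex^'n^'n \<Rightarrow> bool" where
  "psd A \<longleftrightarrow> hermitian A \<and>
     (\<forall>v :: complex^'n. 0 \<le> Re (\<Sum>i\<in>UNIV. cnj (v $ i) * (A *v v) $ i))"

definition mat_sqrt :: "complex^'n^'n \<Rightarrow> complex^'n^'n" where
  "mat_sqrt A = (THE B. psd B \<and> B ** B = A)"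

text \<open>Trace norm  ||A||_1 = Tr sqrt(A^dagger A)  (the trace is real; we take its real part).\<close>
definition trace_norm :: "complex^'n^'n \<Rightarrow> real" where
  "trace_norm A = Re (trace (mat_sqrt (adjoint A ** A)))"

primrec mat_pow :: "complex^'n^'n \<Rightarrow> nat \<Rightarrow> complex^'n^'n" where
  "mat_pow A 0 = mat 1"
| "mat_pow A (Suc k) = A ** mat_pow A k"

definition mat_exp :: "complex^'n^'n \<Rightarrow> complex^'n^'n" where
  "mat_exp A = (\<chi> i j. \<Sum>k. (mat_pow A k $ i $ j) / of_nat (fact k))"

definition mat_div :: "complex^'n^'n \<Rightarrow> complex \<Rightarrow> complex^'n^'n" where
  "mat_div A c = (\<chi> i j. A $ i $ j / c)"

end

theory Submission imports Defs begin


definition ip :: "complex^'n \<Rightarrow> complex^'n \<Rightarrow> complex" where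
  "ip x y = (\<Sum>k\<in>UNIV. cnj (x $ k) * y $ k)"

lemma matrix_add_rdistrib': "((B::complex^'n^'n) + C) ** A = (B ** A) + (C ** A)"
  by (vector matrix_matrix_mult_def sum.distrib[symmetric] field_simps)

lemma mult_sum_left: "(sum (f::_\<Rightarrow>complex^'n^'n) S) ** (B::complex^'n^'n) = (\<Sum>i\<in>S. f i ** B)"
  by (induction S rule: infinite_finite_induct) (auto simp: matrix_add_rdistrib')


lemma mult_sum_right: "(B::complex^'n^'n) ** (sum f S) = (\<Sum>i\<in>S. B ** f i)"
  by (induction S rule: infinite_finite_induct) (auto simp: matrix_add_ldistrib)

lemma mult_scaleR_left: "(r *\<^sub>R A) ** (B::complex^'n^'n) = r *\<^sub>R (A ** B)"
  by (simp add: scalar_matrix_assoc)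

lemma mult_scaleR_right: "(A::complex^'n^'n) ** (r *\<^sub>R B) = r *\<^sub>R (A ** B)"
  by (simp add: matrix_scalar_ac scalar_matrix_assoc)

lemma mulv_sum_left: "(sum f S) *v (x::complex^'n) = (\<Sum>i\<in>S. f i *v x)"
  by (induction S rule: infinite_finite_induct) (auto simp: matrix_vector_mult_add_rdistrib)

lemma mulv_scaleR_left: "(r *\<^sub>R (A::complex^'n^'n)) *v x = r *\<^sub>R (A *v x)"
  by (simp add: vec_eq_iff matrix_vector_mult_def scaleR_sum_right)

lemma mulv_scaleR_right: "(A::complex^'n^'n) *v (r *\<^sub>R x) = r *\<^sub>R (A *v x)"
  by (simp add: vec_eq_iff matrix_vector_mult_def scaleR_sum_right algebra_simps)

lemma adjoint_add: "adjoint (A + B) = adjoint A + adjoint B"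
  by (simp add: adjoint_def vec_eq_iff)
lemma adjoint_scaleR: "adjoint (r *\<^sub>R A) = r *\<^sub>R adjoint A"
  by (simp add: adjoint_def vec_eq_iff)
lemma adjoint_zero: "adjoint 0 = 0"
  by (simp add: adjoint_def vec_eq_iff)
lemma adjoint_sum: "adjoint (sum f S) = (\<Sum>i\<in>S. adjoint (f i))"
  by (induction S rule: infinite_finite_induct) (auto simp: adjoint_add adjoint_zero)

lemma ip_adj: "ip x (A *v y) = ip (adjoint A *v x) y"
proof -
  have "ip x (A *v y) = (\<Sum>k\<in>UNIV. \<Sum>j\<in>UNIV. cnj (x$k) * A$k$j * y$j)"
    by (simp add: ip_def matrix_vector_mult_def sum_distrib_left mult.assoc)
  also have "\<dots> = (\<Sum>j\<in>UNIV. \<Sum>k\<in>UNIV. cnj (x$k) * A$k$j * y$j)"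
    by (rule sum.swap)
  also have "\<dots> = ip (adjoint A *v x) y"
    by (simp add: ip_def adjoint_def matrix_vector_mult_def sum_distrib_left sum_distrib_right mult_ac)
  finally show ?thesis .
qed

lemma cnj_mult_self: "cnj z * z = complex_of_real ((cmod z)^2)"
  by (metis complex_mult_cnj cmod_power2 mult.commute)
lemma comp_scaleR: "(r *\<^sub>R y) $ k = of_real r * (y $ k :: complex)"
  by (subst vector_scaleR_component) (simp add: scaleR_conv_of_real)
lemma ip_self: "ip x x = of_real (\<Sum>k\<in>UNIV. (cmod (x$k))^2)"
  unfolding ip_def by (simp add: cnj_mult_self)

lemma ip_self_eq0: "Re (ip x x) = 0 \<Longrightarrow> x = 0"
proof -
  assume "Re (ip x x) = 0"
  hence "(\<Sum>k\<in>UNIV. (cmod (x$k))^2) = 0" by (simp add: ip_self)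
  hence "\<forall>k\<in>UNIV. (cmod (x$k))^2 = 0" by (subst (asm) sum_nonneg_eq_0_iff) auto
  thus "x = 0" by (simp add: vec_eq_iff)
qed

lemma ip_self_ge0: "0 \<le> Re (ip x x)"
  by (simp add: ip_self sum_nonneg)

lemma ip_scaleR_right: "ip x (r *\<^sub>R y) = of_real r * ip x y"
  unfolding ip_def comp_scaleR by (simp add: sum_distrib_left mult_ac)

lemma ip_add_right: "ip x (y + z) = ip x y + ip x z"
  by (simp add: ip_def sum.distrib algebra_simps)

lemma ip_zero: "ip x 0 = 0" by (simp add: ip_def)
lemma ip_sum_right: "ip x (sum f S) = (\<Sum>i\<in>S. ip x (f i))"
  by (induction S rule: infinite_finite_induct) (auto simp: ip_add_right ip_zero)

definition fc :: "(nat \<Rightarrow> complex^'n^'n) \<Rightarrow> nat set \<Rightarrow> (nat \<Rightarrow> real) \<Rightarrow> complex^'n^'n" where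
  "fc P I f = (\<Sum>i\<in>I. f i *\<^sub>R P i)"

lemma fc_entry: "fc P I f $ a $ b = (\<Sum>i\<in>I. of_real (f i) * P i $ a $ b)"
  unfolding fc_def sum_component vector_scaleR_component by (simp add: scaleR_conv_of_real)

locale pfam =
  fixes P :: "nat \<Rightarrow> complex^('n::finite)^'n" and I :: "nat set"
  assumes fin: "finite I"
    and proj: "\<And>i. i \<in> I \<Longrightarrow> P i ** P i = P i"
    and sa: "\<And>i. i \<in> I \<Longrightarrow> adjoint (P i) = P i"
    and orth: "\<And>i j. i \<in> I \<Longrightarrow> j \<in> I \<Longrightarrow> i \<noteq> j \<Longrightarrow> P i ** P j = 0"
    and compl: "sum P I = mat 1"
begin

lemma inner_delta:
  assumes "i \<in> I"
  shows "(\<Sum>j\<in>I. g j *\<^sub>R (P i ** P j)) = g i *\<^sub>R P i"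
proof -
  have "(\<Sum>j\<in>I. g j *\<^sub>R (P i ** P j)) = (\<Sum>j\<in>I. if j = i then g i *\<^sub>R P i else 0)"
    by (rule sum.cong) (auto simp: orth proj assms)
  also have "\<dots> = g i *\<^sub>R P i" using fin assms by simp
  finally show ?thesis .
qed

lemma F_mult: "fc P I f ** fc P I g = fc P I (\<lambda>i. f i * g i)"
proof -
  have "fc P I f ** fc P I g = (\<Sum>i\<in>I. f i *\<^sub>R (\<Sum>j\<in>I. g j *\<^sub>R (P i ** P j)))"
    apply (simp add: fc_def mult_sum_left mult_sum_right mult_scaleR_left mult_scaleR_right scaleR_sum_right)
    apply (subst sum.swap)
    apply (simp add: mult.commute)
    done
  also have "\<dots> = (\<Sum>i\<in>I. (f i * g i) *\<^sub>R P i)"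
    by (rule sum.cong) (simp_all add: inner_delta)
  finally show ?thesis by (simp add: fc_def)
qed

lemma F_one: "fc P I (\<lambda>_. 1) = mat 1"
  using compl by (simp add: fc_def)

lemma F_pow: "mat_pow (fc P I f) k = fc P I (\<lambda>i. f i ^ k)"
  by (induction k) (simp_all add: F_one F_mult)

lemma F_exp: "mat_exp (fc P I f) = fc P I (\<lambda>i. exp (f i))"
proof -
  have "(\<lambda>k. mat_pow (fc P I f) k $ a $ b / of_nat (fact k)) sums (fc P I (\<lambda>i. exp (f i)) $ a $ b)"
    for a b
  proof -
    have s: "(\<lambda>k. of_real (f i ^ k) * P i $ a $ b / of_nat (fact k)) sums (of_real (exp (f i)) * P i $ a $ b)"
      for i
    proof -
      have "(\<lambda>k. complex_of_real (f i ^ k /\<^sub>R fact k)) sums of_real (exp (f i))"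
        using exp_converges sums_of_real by blast
      hence "(\<lambda>k. complex_of_real (f i ^ k /\<^sub>R fact k) * P i $ a $ b) sums (of_real (exp (f i)) * P i $ a $ b)"
        by (rule sums_mult2)
      thus ?thesis by (simp add: field_simps)
    qed
    show ?thesis unfolding F_pow fc_entry sum_divide_distrib
      by (rule sums_sum) (rule s)
  qed
  thus ?thesis unfolding mat_exp_def by (simp add: vec_eq_iff sums_iff)
qed

lemma F_adj: "adjoint (fc P I f) = fc P I f"
  by (simp add: fc_def adjoint_sum adjoint_scaleR sa)

lemma F_trace: "trace (fc P I f) = (\<Sum>i\<in>I. of_real (f i) * trace (P i))"
proof -
  have "trace (fc P I f) = (\<Sum>a\<in>UNIV. \<Sum>i\<in>I. of_real (f i) * P i $ a $ a)"
    by (simp add: trace_def fc_entry)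
  also have "\<dots> = (\<Sum>i\<in>I. \<Sum>a\<in>UNIV. of_real (f i) * P i $ a $ a)" by (rule sum.swap)
  finally show ?thesis by (simp add: trace_def sum_distrib_left)
qed

lemma F_div: "mat_div (fc P I f) (of_real z) = fc P I (\<lambda>i. f i / z)"
  by (simp add: mat_div_def vec_eq_iff fc_entry sum_divide_distrib)

lemma F_diff: "fc P I f - fc P I g = fc P I (\<lambda>i. f i - g i)"
  by (simp add: fc_def scaleR_diff_left sum_subtractf)

lemma F_single: "i \<in> I \<Longrightarrow> P i = fc P I (\<lambda>j. if j = i then 1 else 0)"
proof -
  assume i: "i \<in> I"
  have "fc P I (\<lambda>j. if j = i then 1 else 0) = (\<Sum>j\<in>I. if j = i then P i else 0)"
    unfolding fc_def by (rule sum.cong) auto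
  also have "\<dots> = P i" using fin i by simp
  finally show ?thesis by simp
qed

lemma trace_P: "i \<in> I \<Longrightarrow> trace (P i) = of_real (\<Sum>a\<in>UNIV. \<Sum>b\<in>UNIV. (cmod (P i $ b $ a))^2)"
proof -
  assume i: "i \<in> I"
  have e: "P i $ a $ b = cnj (P i $ b $ a)" for a b
    using arg_cong[OF sa[OF i], of "\<lambda>A. A $ a $ b"] by (simp add: adjoint_def)
  have "P i $ a $ a = (\<Sum>b\<in>UNIV. P i $ a $ b * P i $ b $ a)" for a
    using arg_cong[OF proj[OF i], of "\<lambda>A. A $ a $ a"] by (simp add: matrix_matrix_mult_def)
  also have "\<dots> a = (\<Sum>b\<in>UNIV. of_real ((cmod (P i $ b $ a))^2))" for a
    by (subst e) (simp add: cnj_mult_self)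
  finally show ?thesis by (simp add: trace_def)
qed

lemma trace_P_pos: "i \<in> I \<Longrightarrow> P i \<noteq> 0 \<Longrightarrow> Re (trace (P i)) > 0"
proof -
  assume i: "i \<in> I" and nz: "P i \<noteq> 0"
  then obtain a b where ab: "P i $ b $ a \<noteq> 0" by (auto simp: vec_eq_iff)
  have "0 < (cmod (P i $ b $ a))^2" using ab by simp
  also have "\<dots> \<le> (\<Sum>b\<in>UNIV. (cmod (P i $ b $ a))^2)"
    by (rule member_le_sum) auto
  also have "\<dots> \<le> (\<Sum>a\<in>UNIV. \<Sum>b\<in>UNIV. (cmod (P i $ b $ a))^2)"
    by (rule member_le_sum[where f="\<lambda>a. \<Sum>b\<in>UNIV. (cmod (P i $ b $ a))^2"]) (auto intro: sum_nonneg)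
  finally show ?thesis using trace_P[OF i] by simp
qed

lemma trace_P_real: "i \<in> I \<Longrightarrow> trace (P i) = of_real (Re (trace (P i)))"
  using trace_P by simp

lemma ip_P: "i \<in> I \<Longrightarrow> ip v (P i *v v) = ip (P i *v v) (P i *v v)"
proof -
  assume i: "i \<in> I"
  have "ip v (P i *v v) = ip v (P i *v (P i *v v))" by (simp add: matrix_vector_mul_assoc proj i)
  also have "\<dots> = ip (P i *v v) (P i *v v)" by (subst ip_adj) (simp add: sa i)
  finally show ?thesis .
qed

lemma F_psd: "(\<And>i. i \<in> I \<Longrightarrow> f i \<ge> 0) \<Longrightarrow> psd (fc P I f)"
proof -
  assume f: "\<And>i. i \<in> I \<Longrightarrow> f i \<ge> 0"
  have "0 \<le> Re (ip v (fc P I f *v v))" for v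
  proof -
    have "ip v (fc P I f *v v) = (\<Sum>i\<in>I. of_real (f i) * ip (P i *v v) (P i *v v))"
      by (simp add: fc_def mulv_sum_left mulv_scaleR_left ip_sum_right ip_scaleR_right ip_P)
    hence "Re (ip v (fc P I f *v v)) = (\<Sum>i\<in>I. f i * Re (ip (P i *v v) (P i *v v)))"
      by (simp add: Re_sum)
    also have "\<dots> \<ge> 0" by (rule sum_nonneg) (simp add: f ip_self_ge0)
    finally show ?thesis .
  qed
  thus ?thesis by (simp add: psd_def hermitian_def F_adj ip_def)
qed

lemma F_eigen:
  assumes i: "i \<in> I" and x: "P i *v x = x"
  shows "fc P I f *v x = f i *\<^sub>R x"
proof -
  have pj: "P j *v x = (P j ** P i) *v x" for j
    by (metis matrix_vector_mul_assoc x)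
  have "fc P I f *v x = (\<Sum>j\<in>I. f j *\<^sub>R ((P j ** P i) *v x))"
    unfolding fc_def mulv_sum_left mulv_scaleR_left pj ..
  also have "\<dots> = (\<Sum>j\<in>I. if j = i then f i *\<^sub>R x else 0)"
    by (rule sum.cong) (auto simp: orth proj i x)
  also have "\<dots> = f i *\<^sub>R x" using fin i by simp
  finally show ?thesis .
qed

lemma sqrt_unique:
  assumes s: "\<And>i. i \<in> I \<Longrightarrow> s i > 0" and B: "psd B" and BB: "B ** B = fc P I (\<lambda>i. (s i)^2)"
  shows "B = fc P I s"
proof -
  have eig: "B *v x = s i *\<^sub>R x" if i: "i \<in> I" and x: "P i *v x = x" for i x
  proof -
    define u where "u = B *v x - s i *\<^sub>R x"
    have "B *v u = (B ** B) *v x - s i *\<^sub>R (B *v x)"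
      by (simp add: u_def matrix_vector_mult_diff_distrib mulv_scaleR_right matrix_vector_mul_assoc)
    also have "\<dots> = (s i)^2 *\<^sub>R x - s i *\<^sub>R (B *v x)" by (simp add: BB F_eigen[OF i x])
    also have "\<dots> = (- s i) *\<^sub>R u" by (simp add: u_def algebra_simps power2_eq_square)
    finally have Bu: "B *v u = (- s i) *\<^sub>R u" .
    have "0 \<le> Re (ip u (B *v u))" using B by (simp add: psd_def ip_def)
    also have "\<dots> = - s i * Re (ip u u)" by (simp only: Bu ip_scaleR_right) simp
    finally have "Re (ip u u) \<le> 0" using s[OF i] by (simp add: mult_le_0_iff)
    hence "Re (ip u u) = 0" using ip_self_ge0[of u] by linarith
    hence "u = 0" by (rule ip_self_eq0)
    thus ?thesis by (simp add: u_def)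
  qed
  have col: "B ** P i = s i *\<^sub>R P i" if i: "i \<in> I" for i
  proof (subst matrix_eq, rule allI)
    fix w
    have "P i *v (P i *v w) = P i *v w" by (simp add: matrix_vector_mul_assoc proj i)
    thus "(B ** P i) *v w = (s i *\<^sub>R P i) *v w"
      by (simp add: eig[OF i] mulv_scaleR_left flip: matrix_vector_mul_assoc)
  qed
  have "B = B ** sum P I" by (simp add: compl)
  also have "\<dots> = (\<Sum>i\<in>I. s i *\<^sub>R P i)" by (simp add: mult_sum_right col)
  finally show ?thesis by (simp add: fc_def)
qed

lemma F_sqrt:
  assumes s: "\<And>i. i \<in> I \<Longrightarrow> s i > 0"
  shows "mat_sqrt (fc P I (\<lambda>i. (s i)^2)) = fc P I s"
  unfolding mat_sqrt_def
proof (rule the_equality)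
  show "psd (fc P I s) \<and> fc P I s ** fc P I s = fc P I (\<lambda>i. (s i)\<^sup>2)"
    using s by (auto intro!: F_psd simp: F_mult power2_eq_square less_imp_le)
qed (use sqrt_unique s in blast)

lemma F_trace_norm:
  assumes c: "\<And>i. i \<in> I \<Longrightarrow> c i \<noteq> 0"
  shows "trace_norm (fc P I c) = (\<Sum>i\<in>I. \<bar>c i\<bar> * Re (trace (P i)))"
proof -
  have "adjoint (fc P I c) ** fc P I c = fc P I (\<lambda>i. (\<bar>c i\<bar>)^2)"
    by (simp add: F_adj F_mult power2_eq_square)
  hence "mat_sqrt (adjoint (fc P I c) ** fc P I c) = fc P I (\<lambda>i. \<bar>c i\<bar>)"
    using F_sqrt[of "\<lambda>i. \<bar>c i\<bar>"] c by simp
  thus ?thesis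
    by (simp add: trace_norm_def F_trace Re_sum)
qed

end

lemma aux_alg: "w > 0 \<Longrightarrow> 0 < \<epsilon> \<Longrightarrow> \<epsilon> < 1 \<Longrightarrow> (d::real) > 0 \<Longrightarrow>
   e / (((1 - \<epsilon>) / \<epsilon>) * (w / d)) * w = e * d * \<epsilon> / (1 - \<epsilon>)"
  by (simp add: field_simps)

theorem corollary1:
  fixes H :: "complex^'n^'n"
    and M :: nat
    and lam :: "nat \<Rightarrow> real"
    and P :: "nat \<Rightarrow> complex^'n^'n"
    and \<epsilon> \<beta> :: real
  assumes herm: "hermitian H"
    and M2: "M \<ge> 2"
    and lam_mono: "\<And>i j. i \<in> {1..M} \<Longrightarrow> j \<in> {1..M} \<Longrightarrow> i < j \<Longrightarrow> lam i < lam j"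
    and P_proj: "\<And>i. i \<in> {1..M} \<Longrightarrow> P i ** P i = P i \<and> adjoint (P i) = P i"
    and P_nonzero: "\<And>i. i \<in> {1..M} \<Longrightarrow> P i \<noteq> 0"
    and P_orth: "\<And>i j. i \<in> {1..M} \<Longrightarrow> j \<in> {1..M} \<Longrightarrow> i \<noteq> j \<Longrightarrow> P i ** P j = 0"
    and P_complete: "(\<Sum>i=1..M. P i) = mat 1"
    and H_decomp: "H = (\<Sum>i=1..M. lam i *\<^sub>R P i)"
    and eps: "0 < \<epsilon>" "\<epsilon> < 1"
    and beta_def: "\<beta> = (1 / (lam 2 - lam 1)) *
        ln (((1 - \<epsilon>) / \<epsilon>) * ((real CARD('n) - Re (trace (P 1))) / Re (trace (P 1))))"
    and beta_nonneg: "\<beta> \<ge> 0"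
  shows "(1/2) * trace_norm (mat_div (mat_exp ((- \<beta>) *\<^sub>R H)) (trace (mat_exp ((- \<beta>) *\<^sub>R H)))
                              - mat_div (P 1) (trace (P 1))) \<le> \<epsilon>"
proof -
  interpret pfam P "{1..M}"
    using P_proj P_orth P_complete by unfold_locales auto
  define I where "I = {1..M}"
  define d where "d i = Re (trace (P i))" for i
  define e where "e i = exp (- \<beta> * lam i)" for i
  define Z where "Z = (\<Sum>i\<in>I. e i * d i)"
  define X where "X = (\<Sum>i=2..M. e i * d i)"
  have I1: "1 \<in> I" and I2: "2 \<in> I" using M2 by (auto simp: I_def)
  have dpos: "i \<in> I \<Longrightarrow> d i > 0" for i
    unfolding d_def I_def using trace_P_pos P_nonzero by auto
  have trP: "i \<in> I \<Longrightarrow> trace (P i) = of_real (d i)" for i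
    unfolding d_def I_def using trace_P_real by auto
  have epos: "e i > 0" for i by (simp add: e_def)
  have Hf: "(- \<beta>) *\<^sub>R H = fc P I (\<lambda>i. - \<beta> * lam i)"
    by (simp add: H_decomp fc_def I_def scaleR_sum_right)
  have E: "mat_exp ((- \<beta>) *\<^sub>R H) = fc P I e"
    unfolding Hf I_def e_def by (rule F_exp)
  have trE: "trace (mat_exp ((- \<beta>) *\<^sub>R H)) = of_real Z"
    unfolding E Z_def using F_trace[of e, folded I_def] trP by (simp add: I_def)
  have sumd: "(\<Sum>i\<in>I. d i) = real CARD('n)"
  proof -
    have "trace (mat 1 :: complex^'n^'n) = (\<Sum>i\<in>I. of_real 1 * trace (P i))"
      using F_trace[of "\<lambda>_. 1"] F_one by (simp add: I_def)
    hence "of_nat CARD('n) = (\<Sum>i\<in>I. trace (P i) :: complex)" by (simp add: trace_I)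
    hence "Re (of_nat CARD('n)) = Re (\<Sum>i\<in>I. trace (P i))" by simp
    thus ?thesis by (simp add: d_def)
  qed
  have Isplit: "sum f I = f 1 + sum f {2..M}" for f :: "nat \<Rightarrow> real"
    unfolding I_def using M2 by (subst sum.atLeast_Suc_atMost) (auto simp: numeral_2_eq_2)
  have Xpos: "X > 0" unfolding X_def
    using M2 dpos epos by (intro sum_pos) (auto simp: I_def)
  have ZX: "Z = e 1 * d 1 + X" unfolding Z_def X_def by (rule Isplit)
  have Zpos: "Z > 0" using ZX Xpos epos dpos[OF I1] by (smt (verit) mult_pos_pos)
  define c where "c i = e i / Z - (if i = 1 then 1 else 0) / d 1" for i
  have mat: "mat_div (mat_exp ((- \<beta>) *\<^sub>R H)) (trace (mat_exp ((- \<beta>) *\<^sub>R H)))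
                              - mat_div (P 1) (trace (P 1)) = fc P I c"
  proof -
    have m1: "mat_div (mat_exp ((- \<beta>) *\<^sub>R H)) (trace (mat_exp ((- \<beta>) *\<^sub>R H))) = fc P I (\<lambda>i. e i / Z)"
      using trE F_div[of e Z] E unfolding I_def by metis
    have Pf: "P 1 = fc P I (\<lambda>j. if j = 1 then 1 else 0)"
      using F_single[of 1] I1 unfolding I_def by blast
    have "mat_div (P 1) (trace (P 1)) = mat_div (P 1) (of_real (d 1))" using trP[OF I1] by simp
    also have "\<dots> = mat_div (fc P I (\<lambda>j. if j = 1 then 1 else 0)) (of_real (d 1))"
      by (rule arg_cong[OF Pf])
    also have "\<dots> = fc P I (\<lambda>i. (if i = 1 then 1 else 0) / d 1)"
      unfolding I_def by (rule F_div)
    finally have m2: "mat_div (P 1) (trace (P 1)) = fc P I (\<lambda>i. (if i = 1 then 1 else 0) / d 1)" .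
    show ?thesis unfolding m1 m2 c_def I_def by (rule F_diff)
  qed
  have c1: "c 1 < 0"
  proof -
    have "e 1 * d 1 < Z" using ZX Xpos by simp
    hence "e 1 / Z < 1 / d 1" using Zpos dpos[OF I1] by (simp add: field_simps)
    thus ?thesis by (simp add: c_def)
  qed
  have cnz: "i \<in> I \<Longrightarrow> c i \<noteq> 0" for i
    using c1 epos[of i] Zpos by (cases "i = 1") (auto simp: c_def)
  have tn: "trace_norm (fc P I c) = (\<Sum>i\<in>I. \<bar>c i\<bar> * d i)"
    using F_trace_norm[of c] cnz by (simp add: I_def d_def)
  also have "\<dots> = \<bar>c 1\<bar> * d 1 + (\<Sum>i=2..M. \<bar>c i\<bar> * d i)" by (rule Isplit)
  also have "(\<Sum>i=2..M. \<bar>c i\<bar> * d i) = X / Z"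
    unfolding X_def sum_divide_distrib
    by (rule sum.cong) (use epos Zpos in \<open>auto simp: c_def less_imp_le\<close>)
  also have "\<bar>c 1\<bar> * d 1 = 1 - e 1 * d 1 / Z"
    using c1 dpos[OF I1] by (simp add: c_def field_simps)
  finally have tn2: "trace_norm (fc P I c) = 2 * X / Z"
    using ZX Zpos by (simp add: field_simps)
  define A where "A = ((1 - \<epsilon>) / \<epsilon>) * ((real CARD('n) - d 1) / d 1)"
  have sumd2: "(\<Sum>i=2..M. d i) = real CARD('n) - d 1" using sumd Isplit[of d] by simp
  have sd2pos: "(\<Sum>i=2..M. d i) > 0"
    using M2 dpos by (intro sum_pos) (auto simp: I_def)
  have Apos: "A > 0" unfolding A_def using eps sd2pos sumd2 dpos[OF I1] by simp
  have gap: "lam 2 - lam 1 > 0" using lam_mono[of 1 2] M2 by auto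
  have bD: "\<beta> * (lam 2 - lam 1) = ln A"
  proof -
    have b: "\<beta> = (1 / (lam 2 - lam 1)) * ln A" using beta_def unfolding A_def d_def .
    show ?thesis unfolding b using gap by (simp add: field_simps)
  qed
  have e2: "e 2 = e 1 / A"
  proof -
    have "e 2 = exp (- \<beta> * lam 1 - \<beta> * (lam 2 - lam 1))" by (simp add: e_def algebra_simps)
    also have "\<dots> = e 1 / exp (ln A)" by (simp only: e_def exp_diff bD)
    finally show ?thesis using Apos by simp
  qed
  have ei: "e i \<le> e 2" if "i \<in> {2..M}" for i
  proof -
    have "lam 2 \<le> lam i" using that lam_mono[of 2 i] by (cases "i = 2") auto
    hence "- \<beta> * lam i \<le> - \<beta> * lam 2" using beta_nonneg by (simp add: mult_left_mono)
    thus ?thesis by (simp add: e_def)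
  qed
  have "X \<le> (\<Sum>i=2..M. e 2 * d i)" unfolding X_def
    by (rule sum_mono) (use ei dpos in \<open>auto intro!: mult_right_mono less_imp_le simp: I_def\<close>)
  also have "\<dots> = e 1 / A * (real CARD('n) - d 1)" by (simp only: sum_distrib_left[symmetric] sumd2 e2)
  also have "\<dots> = e 1 * d 1 * \<epsilon> / (1 - \<epsilon>)"
    unfolding A_def using aux_alg[of "real CARD('n) - d 1" \<epsilon> "d 1" "e 1"] eps dpos[OF I1] sd2pos sumd2 by simp
  finally have Xb: "X * (1 - \<epsilon>) \<le> e 1 * d 1 * \<epsilon>" using eps by (simp add: field_simps)
  have "X / Z \<le> \<epsilon>" using Xb Zpos ZX by (simp add: field_simps)
  thus ?thesis unfolding mat tn2 by simp
qed

end
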